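(* Let $\mathcal{S}$ be an $F$-weighted boundary stratum and $U\subset A_\mathcal{S}$ a subtorus. Then $$\dim T_\mathcal{S}-\dim(U\cap T_\mathcal{S})=\dim_{\mathbb{Q}}\mathrm{ev}(\mathrm{Ann}(U)).$$ In particular, $\dim T_\mathcal{S}=\dim_{\mathbb{Q}}\mathrm{ev}(N(\mathcal{S}))$.
   Context: $F$ is a totally real number field of degree $g$ with trace pairing $\langle x,y\rangle=\mathrm{Tr}_{F/\mathbb{Q}}(xy)$. For a lattice $\mathcal{I}\subset F$, $\mathcal{I}^\vee=\{x:\langle x,y\rangle\in\mathbb{Z}\ \forall y\in\mathcal{I}\}$. An $\mathcal{I}$-weighted stable curve is a stable curve of arithmetic genus $g$ and geometric genus $0$ with an element of $\mathcal{I}$ attached to each branch at each node, such that branches at a node have opposite weights, weights on each component sum to zero, and the weights span $\mathcal{I}$. An $F$-weighted boundary stratum $\mathcal{S}$ is the moduli space of such weighted curves topologically equivalent (weight-preservingly) to a fixed one. $\mathrm{Sym}_{\mathbb{Q}}(F)\subset F\otimes_{\mathbb{Q}}F$ is the symmetric tensors, $\mathbf{S}_{\mathbb{Q}}(F)$ the quotient of $F\otimes_{\mathbb{Q}}F$ by the span of $x\otimes y-y\otimes x$ (and $\mathbf{S}_{\mathbb{Z}}(\mathcal{I}^\vee)$ similarly), dual via $\langle a\otimes b,c\otimes d\rangle=\langle a,c\rangle\langle b,d\rangle$. $N(\mathcal{S})\subset\mathbf{S}_{\mathbb{Q}}(F)$ is the annihilator of the span of $r\otimes r$ over the weights $r$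 of $\mathcal{S}$. $\Lambda^1=\{x\in F\otimes_{\mathbb{Q}}F:\lambda x=x\lambda\ \forall\lambda\in F\}\subset\mathrm{Sym}_{\mathbb{Q}}(F)$, with annihilator $\mathrm{Ann}(\Lambda^1)\subset\mathbf{S}_{\mathbb{Q}}(F)$. The ambient torus is $A_\mathcal{S}=\mathrm{Hom}_{\mathbb{Z}}(N(\mathcal{S})\cap\mathbf{S}_{\mathbb{Z}}(\mathcal{I}^\vee),\mathbb{G}_m)$, so its rational character space is $\chi(A_\mathcal{S})\otimes\mathbb{Q}=N(\mathcal{S})$; for a subtorus $U$, $\mathrm{Ann}(U)\subset N(\mathcal{S})$ is the subspace of rational characters trivial on $U$. The RM-torus $T_\mathcal{S}$ is the kernel of the restriction map $A_\mathcal{S}\to\mathrm{Hom}(N(\mathcal{S})\cap\mathrm{Ann}(\Lambda^1)\cap\mathbf{S}_{\mathbb{Z}}(\mathcal{I}^\vee),\mathbb{G}_m)$, so $\mathrm{Ann}(T_\mathcal{S})=N(\mathcal{S})\cap\mathrm{Ann}(\Lambda^1)$. The evaluation map is $\mathrm{ev}\colon\mathbf{S}_{\mathbb{Q}}(F)\to F$, $\mathrm{ev}(s\otimes t)=st$. *)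

theory Defs
  imports Complex_Main "HOL-Library.Function_Algebras"
begin

definition qs :: "rat \<Rightarrow> 'f::field_char_0 \<Rightarrow> 'f" where
  "qs q x = of_rat q * x"

definition totally_real_number_field :: "'f::field_char_0 itself \<Rightarrow> nat \<Rightarrow> bool" where
  "totally_real_number_field TYPE('f) g \<longleftrightarrow>
     (\<exists>B::'f set. finite B \<and> module.span qs B = UNIV) \<and>
     vector_space.dim qs (UNIV::'f set) = g \<and>
     (\<forall>\<sigma>::'f \<Rightarrow> complex.
        (\<sigma> 1 = 1 \<and> (\<forall>x y. \<sigma> (x + y) = \<sigma> x + \<sigma> y) \<and> (\<forall>x y. \<sigma> (x * y) = \<sigma> x * \<sigma> y))
        \<longrightarrow> (\<forall>x. \<sigma> x \<in> \<real>))"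

text \<open>A fixed Q-basis of F (used only to define the trace; the trace does not depend on it).\<close>
definition fbasis :: "'f::field_char_0 set" where
  "fbasis = (SOME B. \<not> module.dependent qs B \<and> module.span qs B = UNIV)"

text \<open>Tr_{F/Q}(x): trace of the Q-linear map y \<mapsto> x*y, computed in the basis fbasis.\<close>
definition trF :: "'f::field_char_0 \<Rightarrow> rat" where
  "trF x = (\<Sum>b\<in>fbasis. module.representation qs fbasis (x * b) b)"

definition tpair :: "'f::field_char_0 \<Rightarrow> 'f \<Rightarrow> rat" where
  "tpair x y = trF (x * y)"

definition zspan :: "'f::field_char_0 set \<Rightarrow> 'f set" where
  "zspan X = {\<Sum>x\<in>X'. of_int (n x) * x | X' n. finite X' \<and> X' \<subseteq> X}"

definition is_lattice :: "'f::field_char_0 set \<Rightarrow> bool" where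
  "is_lattice I \<longleftrightarrow> (\<exists>B. finite B \<and> \<not> module.dependent qs B \<and> module.span qs B = UNIV
                        \<and> I = zspan B)"

text \<open>An element x of F \<otimes>_Q F is represented by the Q-bilinear form (c,d) \<mapsto> <x, c \<otimes> d>,
  where <a\<otimes>b, c\<otimes>d> = <a,c><b,d>. (Injective and onto bilinear forms since the trace
  pairing is perfect.)  Thus the pure tensor s \<otimes> t is (c,d) \<mapsto> <s,c><t,d>.\<close>

definition ptens :: "'f::field_char_0 \<Rightarrow> 'f \<Rightarrow> ('f \<Rightarrow> 'f \<Rightarrow> rat)" where
  "ptens s t = (\<lambda>c d. tpair s c * tpair t d)"

definition bscale :: "rat \<Rightarrow> ('f \<Rightarrow> 'f \<Rightarrow> rat) \<Rightarrow> ('f \<Rightarrow> 'f \<Rightarrow> rat)" where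
  "bscale q x = (\<lambda>c d. q * x c d)"

definition TensQ :: "('f::field_char_0 \<Rightarrow> 'f \<Rightarrow> rat) set" where
  "TensQ = module.span bscale {ptens s t | s t. True}"

definition SymQ :: "('f::field_char_0 \<Rightarrow> 'f \<Rightarrow> rat) set" where
  "SymQ = {x \<in> TensQ. (\<lambda>c d. x d c) = x}"

text \<open>Left/right multiplication: \<lambda>(s\<otimes>t) = (\<lambda>s)\<otimes>t, (s\<otimes>t)\<lambda> = s\<otimes>(t\<lambda>); in the bilinear-form
  model these are x \<mapsto> ((c,d) \<mapsto> x(\<lambda>c,d)) resp. x \<mapsto> ((c,d) \<mapsto> x(c,\<lambda>d)).\<close>
definition lmul :: "'f::field_char_0 \<Rightarrow> ('f \<Rightarrow> 'f \<Rightarrow> rat) \<Rightarrow> ('f \<Rightarrow> 'f \<Rightarrow> rat)" where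
  "lmul l x = (\<lambda>c d. x (l * c) d)"

definition rmul :: "('f::field_char_0 \<Rightarrow> 'f \<Rightarrow> rat) \<Rightarrow> 'f \<Rightarrow> ('f \<Rightarrow> 'f \<Rightarrow> rat)" where
  "rmul x l = (\<lambda>c d. x c (l * d))"

definition Lambda1 :: "('f::field_char_0 \<Rightarrow> 'f \<Rightarrow> rat) set" where
  "Lambda1 = {x \<in> TensQ. \<forall>l. lmul l x = rmul x l}"

text \<open>S_Q(F) = (F \<otimes> F)/(x\<otimes>y - y\<otimes>x) is represented via the perfect pairing with Sym_Q(F):
  the class of s \<otimes> t is the functional y \<mapsto> <s\<otimes>t, y> = y(s,t) on Sym_Q(F)
  (extended by 0 outside Sym_Q(F)).\<close>

definition sclass :: "'f::field_char_0 \<Rightarrow> 'f \<Rightarrow> (('f \<Rightarrow> 'f \<Rightarrow> rat) \<Rightarrow> rat)" where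
  "sclass s t = (\<lambda>y. if y \<in> SymQ then y s t else 0)"

definition sscale :: "rat \<Rightarrow> (('f \<Rightarrow> 'f \<Rightarrow> rat) \<Rightarrow> rat) \<Rightarrow> (('f \<Rightarrow> 'f \<Rightarrow> rat) \<Rightarrow> rat)" where
  "sscale q p = (\<lambda>y. q * p y)"

definition SQ :: "(('f::field_char_0 \<Rightarrow> 'f \<Rightarrow> rat) \<Rightarrow> rat) set" where
  "SQ = module.span sscale {sclass s t | s t. True}"

definition NS :: "'f::field_char_0 set \<Rightarrow> (('f \<Rightarrow> 'f \<Rightarrow> rat) \<Rightarrow> rat) set" where
  "NS R = {p \<in> SQ. \<forall>y \<in> module.span bscale ((\<lambda>r. ptens r r) ` R). p y = 0}"

definition AnnLambda1 :: "(('f::field_char_0 \<Rightarrow> 'f \<Rightarrow> rat) \<Rightarrow> rat) set" where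
  "AnnLambda1 = {p \<in> SQ. \<forall>y \<in> Lambda1. p y = 0}"

definition evS :: "(('f::field_char_0 \<Rightarrow> 'f \<Rightarrow> rat) \<Rightarrow> rat) \<Rightarrow> 'f" where
  "evS p = (THE v. \<exists>(n::nat) c s t. p = (\<Sum>i<n. sscale (c i) (sclass (s i) (t i)))
                          \<and> v = (\<Sum>i<n. qs (c i) (s i * t i)))"

definition dimS :: "(('f::field_char_0 \<Rightarrow> 'f \<Rightarrow> rat) \<Rightarrow> rat) set \<Rightarrow> nat" where
  "dimS W = vector_space.dim sscale W"

definition dimF :: "'f::field_char_0 set \<Rightarrow> nat" where
  "dimF V = vector_space.dim qs V"

definition ssum :: "('a::plus) set \<Rightarrow> 'a set \<Rightarrow> 'a set" where
  "ssum A B = {a + b | a b. a \<in> A \<and> b \<in> B}"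

text \<open>A stable curve of arithmetic genus g and geometric genus 0 is encoded by its dual graph:
  vertices V (components, all rational), edges E (nodes), ends e = (u,v) the components
  containing the two branches of the node e.  The weight of the branch at fst(ends e) is w e,
  that of the branch at snd(ends e) is - w e (opposite weights).\<close>

definition valence :: "'v \<Rightarrow> 'e set \<Rightarrow> ('e \<Rightarrow> 'v \<times> 'v) \<Rightarrow> nat" where
  "valence v E ends = card {e \<in> E. fst (ends e) = v} + card {e \<in> E. snd (ends e) = v}"

definition weighted_stable_curve ::
  "nat \<Rightarrow> 'f::field_char_0 set \<Rightarrow> 'v set \<Rightarrow> 'e set \<Rightarrow> ('e \<Rightarrow> 'v \<times> 'v) \<Rightarrow> ('e \<Rightarrow> 'f) \<Rightarrow> bool" where
  "weighted_stable_curve g I V E ends w \<longleftrightarrow>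
     finite V \<and> V \<noteq> {} \<and> finite E \<and>
     (\<forall>e\<in>E. fst (ends e) \<in> V \<and> snd (ends e) \<in> V) \<and>
     \<comment> \<open>connected\<close>
     (\<forall>u\<in>V. \<forall>v\<in>V. (u, v) \<in> ({ends e | e. e \<in> E} \<union> {prod.swap (ends e) | e. e \<in> E})\<^sup>*) \<and>
     \<comment> \<open>arithmetic genus g (all components rational)\<close>
     card E + 1 = card V + g \<and>
     \<comment> \<open>stability: every (rational) component has at least 3 special points\<close>
     (\<forall>v\<in>V. valence v E ends \<ge> 3) \<and>
     \<comment> \<open>weights lie in I\<close>
     (\<forall>e\<in>E. w e \<in> I) \<and>
     \<comment> \<open>weights on each component sum to zero\<close>
     (\<forall>v\<in>V. (\<Sum>e\<in>{e\<in>E. fst (ends e) = v}. w e) + (\<Sum>e\<in>{e\<in>E. snd (ends e) = v}. - w e) = 0) \<and>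
     \<comment> \<open>weights span I\<close>
     zspan (w ` E \<union> uminus ` w ` E) = I"

definition weights :: "'e set \<Rightarrow> ('e \<Rightarrow> 'f::field_char_0) \<Rightarrow> 'f set" where
  "weights E w = w ` E \<union> uminus ` w ` E"

text \<open>A subtorus U of A_S is determined by (and determines) its rational annihilator
  Ann(U), an arbitrary Q-subspace of N(S) = \<chi>(A_S) \<otimes> Q.  For subtori U, U1 one has
  dim U = dim N(S) - dim Ann(U) and Ann(identity component of U meet U1) = Ann(U) + Ann(U1) (rationally).\<close>

definition subtorus_dim :: "(('f::field_char_0 \<Rightarrow> 'f \<Rightarrow> rat) \<Rightarrow> rat) set \<Rightarrow>
    (('f \<Rightarrow> 'f \<Rightarrow> rat) \<Rightarrow> rat) set \<Rightarrow> int" where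
  "subtorus_dim N AnnU = int (dimS N) - int (dimS AnnU)"

definition AnnT :: "'f::field_char_0 set \<Rightarrow> (('f \<Rightarrow> 'f \<Rightarrow> rat) \<Rightarrow> rat) set" where
  "AnnT R = NS R \<inter> AnnLambda1"

end

theory Submission imports Defs begin

interpretation Fq: vector_space "qs :: rat \<Rightarrow> 'f::field_char_0 \<Rightarrow> 'f"
  by unfold_locales (simp_all add: qs_def algebra_simps of_rat_add of_rat_mult)

interpretation Tq: vector_space "bscale :: rat \<Rightarrow> ('f \<Rightarrow> 'f \<Rightarrow> rat) \<Rightarrow> _"
  by unfold_locales (simp_all add: bscale_def fun_eq_iff algebra_simps)

interpretation Sq: vector_space "sscale :: rat \<Rightarrow> (('f \<Rightarrow> 'f \<Rightarrow> rat) \<Rightarrow> rat) \<Rightarrow> _"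
  by unfold_locales (simp_all add: sscale_def fun_eq_iff algebra_simps)

interpretation P: vector_space_pair "sscale :: rat \<Rightarrow> (('f::field_char_0 \<Rightarrow> 'f \<Rightarrow> rat) \<Rightarrow> rat) \<Rightarrow> _"
   "qs :: rat \<Rightarrow> 'f \<Rightarrow> 'f" ..

lemma sum_apply_fun: "(sum F I) x = (\<Sum>i\<in>I. F i x)"
  by (induction I rule: infinite_finite_induct) auto

lemma lin_sum:
  fixes h :: "'f::field_char_0 \<Rightarrow> rat"
  assumes "\<And>x y. h (x+y) = h x + h y" "\<And>q x. h (of_rat q * x) = q * h x"
  shows "h (\<Sum>i\<in>I. of_rat (c i) * v i) = (\<Sum>i\<in>I. c i * h (v i))"
proof (induction I rule: infinite_finite_induct)
  case (infinite A)
  have "h 0 = h 0 + h 0" using assms(1)[of 0 0] by simp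
  then show ?case using infinite by simp
next
  case empty
  have "h 0 = h 0 + h 0" using assms(1)[of 0 0] by simp
  then show ?case by simp
next
  case (insert x F)
  then show ?case using assms by simp
qed

context
  assumes H: "\<exists>B::'f::field_char_0 set. finite B \<and> Fq.span B = UNIV"
begin

lemma fb: "finite (fbasis::'f set) \<and> Fq.independent (fbasis::'f set) \<and> Fq.span (fbasis::'f set) = UNIV"
proof -
  obtain B0 :: "'f set" where B0: "finite B0" "Fq.span B0 = UNIV" using H by blast
  obtain B :: "'f set" where B: "Fq.independent B" "UNIV \<subseteq> Fq.span B"
    using Fq.basis_exists[of UNIV] by blast
  have "\<exists>B::'f set. \<not> Fq.dependent B \<and> Fq.span B = UNIV" using B by blast
  then have fbp: "\<not> Fq.dependent (fbasis::'f set) \<and> Fq.span (fbasis::'f set) = UNIV"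
    unfolding fbasis_def by (rule someI_ex)
  have "finite (fbasis::'f set)"
    using Fq.independent_span_bound[OF B0(1), of fbasis] fbp B0(2) by blast
  then show ?thesis using fbp by blast
qed

lemma fb_fin: "finite (fbasis::'f set)" and fb_ind: "Fq.independent (fbasis::'f set)"
  and fb_span: "Fq.span (fbasis::'f set) = UNIV"
  using fb by auto

lemma rep_add: "Fq.representation fbasis (x + y) b = Fq.representation fbasis x b + Fq.representation fbasis (y::'f) b"
  using Fq.representation_add[OF fb_ind] fb_span by simp

lemma rep_scale: "Fq.representation fbasis (of_rat q * x) b = q * Fq.representation fbasis (x::'f) b"
  using Fq.representation_scale[OF fb_ind, of x q] fb_span by (simp add: qs_def)

lemma trF_add: "trF (x + y) = trF x + trF (y::'f)"
  unfolding trF_def by (simp add: distrib_right rep_add sum.distrib)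

lemma trF_scale: "trF (of_rat q * x) = q * trF (x::'f)"
  unfolding trF_def by (simp add: mult.assoc rep_scale sum_distrib_left)

lemma trF_diff: "trF (x - y) = trF x - trF (y::'f)"
  using trF_add[of "x - y" y] by simp

lemma expand_elem: "z = (\<Sum>b\<in>fbasis. of_rat (Fq.representation fbasis z b) * (b::'f))"
  using Fq.sum_representation_eq[OF fb_ind _ fb_fin subset_refl, of z] fb_span by (simp add: qs_def)

lemma trF_one: "trF (1::'f) = of_nat (card (fbasis::'f set))"
proof -
  have "\<And>b. b \<in> (fbasis::'f set) \<Longrightarrow> Fq.representation fbasis b b = 1"
    using Fq.representation_basis[OF fb_ind] by simp
  then show ?thesis unfolding trF_def by simp
qed

lemma fb_ne: "(fbasis::'f set) \<noteq> {}"
proof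
  assume "(fbasis::'f set) = {}"
  then have "Fq.span (fbasis::'f set) = {0}" using Fq.span_empty by simp
  then show False using fb_span by (metis UNIV_I one_neq_zero singletonD)
qed

lemma nondeg: assumes "\<And>l. trF (l * v) = 0" shows "(v::'f) = 0"
proof (rule ccontr)
  assume "v \<noteq> 0"
  then have "trF (inverse v * v) = trF (1::'f)" by simp
  also have "\<dots> \<noteq> 0" using trF_one fb_ne fb_fin by simp
  finally show False using assms by simp
qed


lemma rep_comb: assumes "b \<in> (fbasis::'f set)"
  shows "Fq.representation fbasis (\<Sum>b'\<in>fbasis. qs (t b') b') b = t b"
proof -
  have "Fq.representation fbasis (\<Sum>b'\<in>fbasis. qs (t b') b') b
      = (\<Sum>b'\<in>fbasis. Fq.representation fbasis (qs (t b') b') b)"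
    using fun_cong[OF Fq.representation_sum[OF fb_ind, of fbasis "\<lambda>b'. qs (t b') b'"]] fb_span
    by simp
  also have "\<dots> = (\<Sum>b'\<in>fbasis. t b' * (if b = b' then 1 else 0))"
    using Fq.representation_scale[OF fb_ind] Fq.representation_basis[OF fb_ind] fb_span
    by (intro sum.cong) auto
  also have "\<dots> = t b" using assms fb_fin by (simp add: if_distrib sum.delta cong: if_cong)
  finally show ?thesis .
qed

lemma trF_expand: "trF (v * z) = (\<Sum>b\<in>fbasis. Fq.representation fbasis z b * trF (v * (b::'f)))"
proof -
  have "trF (v * z) = trF (v * (\<Sum>b\<in>fbasis. of_rat (Fq.representation fbasis z b) * (b::'f)))"
    using expand_elem[of z] by simp
  also have "\<dots> = trF (\<Sum>b\<in>fbasis. of_rat (Fq.representation fbasis z b) * (v * b))"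
    by (simp add: sum_distrib_left mult.left_commute)
  also have "\<dots> = (\<Sum>b\<in>fbasis. Fq.representation fbasis z b * trF (v * (b::'f)))"
    by (rule lin_sum) (simp_all add: trF_add trF_scale)
  finally show ?thesis .
qed

lemma dual_ex: assumes "b0 \<in> (fbasis::'f set)"
  shows "\<exists>d. \<forall>z. trF (d * z) = Fq.representation fbasis z b0"
proof -
  interpret FD: finite_dimensional_vector_space "qs :: rat \<Rightarrow> 'f \<Rightarrow> 'f" fbasis
    by unfold_locales (use fb in auto)
  define phi where "phi x = (\<Sum>b\<in>fbasis. qs (trF (x * b)) b)" for x :: 'f
  have lin: "Vector_Spaces.linear qs qs phi"
    unfolding Vector_Spaces.linear_iff
  proof (intro conjI allI)
    show "vector_space (qs :: rat \<Rightarrow> 'f \<Rightarrow> 'f)" by unfold_locales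
    show "vector_space (qs :: rat \<Rightarrow> 'f \<Rightarrow> 'f)" by unfold_locales
    fix x y :: 'f and c :: rat
    show "phi (x + y) = phi x + phi y"
      unfolding phi_def by (simp add: distrib_right trF_add qs_def of_rat_add sum.distrib)
    show "phi (qs c x) = qs c (phi x)"
      unfolding phi_def qs_def by (simp add: mult.assoc trF_scale of_rat_mult sum_distrib_left)
  qed
  have repphi: "Fq.representation fbasis (phi x) b = trF (x * b)" if "b \<in> fbasis" for x b
    unfolding phi_def using rep_comb[OF that] .
  have "inj phi"
  proof (rule injI)
    fix x y assume eq: "phi x = phi y"
    have "trF (l * (x - y)) = 0" for l
    proof -
      have "trF ((x - y) * b) = 0" if "b \<in> fbasis" for b
        using repphi[OF that, of x] repphi[OF that, of y] eq
        by (simp add: algebra_simps trF_diff)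
      then have "trF ((x - y) * l) = 0" using trF_expand[of "x - y" l] by simp
      then show ?thesis by (simp add: mult.commute)
    qed
    then show "x = y" using nondeg[of "x - y"] by simp
  qed
  then have "surj phi" using FD.linear_inj_imp_surj[OF lin] by blast
  then obtain x where x: "phi x = b0" by (metis surjD)
  have xb: "trF (x * b) = (if b = b0 then 1 else 0)" if "b \<in> fbasis" for b
    using repphi[OF that, of x] x Fq.representation_basis[OF fb_ind assms] by auto
  have "trF (x * z) = Fq.representation fbasis z b0" for z
  proof -
    have "trF (x * z) = (\<Sum>b\<in>fbasis. Fq.representation fbasis z b * (if b = b0 then 1 else 0))"
      unfolding trF_expand[of x z] by (rule sum.cong) (auto simp: xb)
    also have "\<dots> = Fq.representation fbasis z b0" using assms fb_fin
      by (simp add: if_distrib cong: if_cong)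
    finally show ?thesis .
  qed
  then show ?thesis by blast
qed

definition dual :: "'f::field_char_0 \<Rightarrow> 'f" where
  "dual b0 = (SOME d. \<forall>z. trF (d * z) = Fq.representation fbasis z b0)"

lemma dual_prop: "b0 \<in> (fbasis::'f set) \<Longrightarrow> trF (dual b0 * z) = Fq.representation fbasis z b0"
  unfolding dual_def using someI_ex[OF dual_ex] by blast


definition bilin :: "('f::field_char_0 \<Rightarrow> 'f \<Rightarrow> rat) \<Rightarrow> bool" where
  "bilin y \<longleftrightarrow> (\<forall>c1 c2 d. y (c1+c2) d = y c1 d + y c2 d) \<and> (\<forall>c d1 d2. y c (d1+d2) = y c d1 + y c d2)
     \<and> (\<forall>q c d. y (of_rat q * c) d = q * y c d) \<and> (\<forall>q c d. y c (of_rat q * d) = q * y c d)"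

lemma expand_bilin: assumes "bilin y"
  shows "y s t = (\<Sum>b1\<in>fbasis. \<Sum>b2\<in>fbasis. Fq.representation fbasis s b1 * Fq.representation fbasis t b2 * y b1 (b2::'f))"
proof -
  have "y s t = y (\<Sum>b\<in>fbasis. of_rat (Fq.representation fbasis s b) * (b::'f)) t"
    using expand_elem[of s] by simp
  also have "\<dots> = (\<Sum>b1\<in>fbasis. Fq.representation fbasis s b1 * y b1 t)"
    by (rule lin_sum[where h="\<lambda>c. y c t"]) (use assms in \<open>simp_all add: bilin_def\<close>)
  also have "\<dots> = (\<Sum>b1\<in>fbasis. Fq.representation fbasis s b1 * (\<Sum>b2\<in>fbasis. Fq.representation fbasis t b2 * y b1 b2))"
  proof (rule sum.cong[OF refl])
    fix b1
    have "y b1 t = y b1 (\<Sum>b\<in>fbasis. of_rat (Fq.representation fbasis t b) * (b::'f))"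
      using expand_elem[of t] by simp
    also have "\<dots> = (\<Sum>b2\<in>fbasis. Fq.representation fbasis t b2 * y b1 b2)"
      by (rule lin_sum[where h="\<lambda>d. y b1 d"]) (use assms in \<open>simp_all add: bilin_def\<close>)
    finally show "Fq.representation fbasis s b1 * y b1 t = Fq.representation fbasis s b1 * (\<Sum>b2\<in>fbasis. Fq.representation fbasis t b2 * y b1 b2)"
      by simp
  qed
  also have "\<dots> = (\<Sum>b1\<in>fbasis. \<Sum>b2\<in>fbasis. Fq.representation fbasis s b1 * Fq.representation fbasis t b2 * y b1 (b2::'f))"
    by (simp add: sum_distrib_left mult.assoc)
  finally show ?thesis .
qed

lemma bilin_zero: "bilin (0::'f \<Rightarrow> 'f \<Rightarrow> rat)"
  by (simp add: bilin_def)

lemma trF_mscale: "trF (s * (of_rat q * c)) = q * trF (s * (c::'f))"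
proof -
  have e: "s * (of_rat q * c) = of_rat q * (s * c)" by (simp add: mult.left_commute)
  show ?thesis unfolding e by (rule trF_scale)
qed

lemma trF_add2: "trF (s * (c1 + c2)) = trF (s * c1) + trF (s * (c2::'f))"
  by (simp add: distrib_left trF_add)

lemma bilin_step: assumes b: "bilin y" shows "bilin (bscale a (ptens s t) + (y::'f \<Rightarrow> 'f \<Rightarrow> rat))"
proof -
  define z where "z = bscale a (ptens s t) + y"
  have z: "z c d = a * (trF (s*c) * trF (t*d)) + y c d" for c d
    by (simp add: z_def bscale_def ptens_def tpair_def)
  have y1: "y (c1+c2) d = y c1 d + y c2 d" and y2: "y c (d1+d2) = y c d1 + y c d2"
    and y3: "y (of_rat q * c) d = q * y c d" and y4: "y c (of_rat q * d) = q * y c d"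
    for c1 c2 c d1 d2 d q using b unfolding bilin_def by blast+
  have "z (c1+c2) d = z c1 d + z c2 d" for c1 c2 d
    unfolding z trF_add2 y1 by (simp add: algebra_simps)
  moreover have "z c (d1+d2) = z c d1 + z c d2" for c d1 d2
    unfolding z trF_add2 y2 by (simp add: algebra_simps)
  moreover have "z (of_rat q * c) d = q * z c d" for q c d
    unfolding z trF_mscale y3 by (simp add: algebra_simps)
  moreover have "z c (of_rat q * d) = q * z c d" for q c d
    unfolding z trF_mscale y4 by (simp add: algebra_simps)
  ultimately show ?thesis unfolding bilin_def z_def by blast
qed

lemma TensQ_bilin: "y \<in> (TensQ::('f \<Rightarrow> 'f \<Rightarrow> rat) set) \<Longrightarrow> bilin y"
  unfolding TensQ_def
proof (induction rule: Tq.span_induct_alt)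
  case base then show ?case by (rule bilin_zero)
next
  case (step c x y) then show ?case using bilin_step by blast
qed

definition yl :: "'f::field_char_0 \<Rightarrow> 'f \<Rightarrow> 'f \<Rightarrow> rat" where
  "yl l = (\<lambda>c d. trF (l * c * d))"

lemma yl_bilin: "bilin (yl (l::'f))"
proof -
  have a1: "trF (l*(c1+c2)*d) = trF(l*c1*d) + trF(l*c2*d)" for c1 c2 d
    by (simp add: distrib_left distrib_right trF_add)
  have a2: "trF (l*c*(d1+d2)) = trF(l*c*d1) + trF(l*c*d2)" for c d1 d2
    by (simp add: distrib_left distrib_right trF_add)
  have a3: "trF (l*(of_rat q*c)*d) = q*trF(l*c*d)" for q c d
  proof -
    have e: "l*(of_rat q*c)*d = of_rat q*(l*c*d)" by (simp add: mult_ac)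
    show ?thesis unfolding e by (rule trF_scale)
  qed
  have a4: "trF (l*c*(of_rat q*d)) = q*trF(l*c*d)" for q c d
  proof -
    have e: "l*c*(of_rat q*d) = of_rat q*(l*c*d)" by (simp add: mult_ac)
    show ?thesis unfolding e by (rule trF_scale)
  qed
  show ?thesis unfolding bilin_def yl_def using a1 a2 a3 a4 by blast
qed

lemma yl_TensQ: "yl (l::'f) \<in> TensQ"
proof -
  let ?R = "Fq.representation fbasis"
  define Y where "Y = (\<Sum>p\<in>fbasis \<times> fbasis. bscale (trF (l * fst p * snd p)) (ptens (dual (fst p)) (dual (snd p))))"
  have "Y \<in> Tq.span {ptens s t | s t. True}"
    unfolding Y_def by (rule Tq.span_sum, rule Tq.span_scale, rule Tq.span_base) blast
  moreover have "yl l = Y"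
  proof (intro ext)
    fix c d :: 'f
    have "Y c d = (\<Sum>p\<in>fbasis \<times> fbasis. trF (l * fst p * snd p) * (tpair (dual (fst p)) c * tpair (dual (snd p)) d))"
      unfolding Y_def sum_apply_fun by (simp only: bscale_def ptens_def)
    also have "\<dots> = (\<Sum>p\<in>fbasis \<times> fbasis. trF (l * fst p * snd p) * (?R c (fst p) * ?R d (snd p)))"
    proof (rule sum.cong[OF refl])
      fix p :: "'f \<times> 'f" assume "p \<in> fbasis \<times> fbasis"
      then have "fst p \<in> fbasis" "snd p \<in> fbasis" by auto
      then show "trF (l * fst p * snd p) * (tpair (dual (fst p)) c * tpair (dual (snd p)) d) = trF (l * fst p * snd p) * (?R c (fst p) * ?R d (snd p))"
        unfolding tpair_def by (simp only: dual_prop)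
    qed
    also have "\<dots> = (\<Sum>p\<in>fbasis \<times> fbasis. ?R c (fst p) * ?R d (snd p) * yl l (fst p) (snd p))"
      by (rule sum.cong[OF refl]) (simp add: yl_def mult_ac)
    also have "\<dots> = (\<Sum>b1\<in>fbasis. \<Sum>b2\<in>fbasis. ?R c b1 * ?R d b2 * yl l b1 b2)"
      by (simp add: sum.cartesian_product split_def)
    also have "\<dots> = yl l c d" by (rule expand_bilin[OF yl_bilin, symmetric])
    finally show "yl l c d = Y c d" by simp
  qed
  ultimately show ?thesis unfolding TensQ_def by simp
qed

lemma yl_Sym: "yl (l::'f) \<in> SymQ"
  unfolding SymQ_def
proof (rule CollectI, rule conjI)
  show "yl l \<in> TensQ" by (rule yl_TensQ)
  show "(\<lambda>c d. yl l d c) = yl l" by (simp add: yl_def fun_eq_iff mult_ac)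
qed

lemma yl_Lambda1: "yl (l::'f) \<in> Lambda1"
  unfolding Lambda1_def
proof (rule CollectI, rule conjI)
  show "yl l \<in> TensQ" by (rule yl_TensQ)
  show "\<forall>m. lmul m (yl l) = rmul (yl l) m" by (simp add: yl_def lmul_def rmul_def fun_eq_iff mult_ac)
qed

lemma Lambda1_eq: assumes "y \<in> Lambda1" shows "y c d = y 1 (c * (d::'f))"
proof -
  have "lmul c y = rmul y c" using assms unfolding Lambda1_def by simp
  then have "lmul c y 1 d = rmul y c 1 d" by simp
  then show ?thesis unfolding lmul_def rmul_def by simp
qed

lemma Lambda1_Sym: assumes a: "y \<in> (Lambda1::('f \<Rightarrow> 'f \<Rightarrow> rat) set)" shows "y \<in> SymQ"
  unfolding SymQ_def
proof (rule CollectI, rule conjI)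
  show "y \<in> TensQ" using a unfolding Lambda1_def by simp
  show "(\<lambda>c d. y d c) = y"
  proof (intro ext)
    fix c d show "y d c = y c d" using Lambda1_eq[OF a, of d c] Lambda1_eq[OF a, of c d] by (simp add: mult.commute)
  qed
qed


lemma SQ_rep: "p \<in> (SQ::(('f \<Rightarrow> 'f \<Rightarrow> rat) \<Rightarrow> rat) set) \<Longrightarrow>
   \<exists>(n::nat) c s t. p = (\<Sum>i<n. sscale (c i) (sclass (s i) (t i)))"
  unfolding SQ_def
proof (induction rule: Sq.span_induct_alt)
  case base
  show ?case by (rule exI[where x="0::nat"]) simp
next
  case (step a x y)
  from step(1) obtain s0 t0 where x: "x = sclass s0 t0" by blast
  from step(2) obtain n :: nat and c s t where y: "y = (\<Sum>i<n. sscale (c i) (sclass (s i) (t i)))" by blast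
  define c' where "c' = c(n := a)"
  define s' where "s' = s(n := s0)"
  define t' where "t' = t(n := t0)"
  have 1: "(\<Sum>i<n. sscale (c' i) (sclass (s' i) (t' i))) = (\<Sum>i<n. sscale (c i) (sclass (s i) (t i)))"
    by (rule sum.cong) (auto simp: c'_def s'_def t'_def)
  have "(\<Sum>i<Suc n. sscale (c' i) (sclass (s' i) (t' i))) = y + sscale a x"
    using 1 x y by (simp add: c'_def s'_def t'_def)
  then show ?case by (metis add.commute)
qed

lemma eval_rep: "y \<in> SymQ \<Longrightarrow> (\<Sum>i<(n::nat). sscale (c i) (sclass (s i) (t i))) y = (\<Sum>i<n. c i * y (s i) (t i))"
  by (simp add: sum_apply_fun sscale_def sclass_def)

lemma tr_rep: "trF (l * (\<Sum>i<(n::nat). qs (c i) (s i * t i))) = (\<Sum>i<n. sscale (c i) (sclass (s i) (t i))) (yl (l::'f))"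
proof -
  have "trF (l * (\<Sum>i<n. qs (c i) (s i * t i))) = trF (\<Sum>i<n. of_rat (c i) * (l * (s i * t i)))"
    unfolding qs_def sum_distrib_left
    by (rule arg_cong[where f=trF], rule sum.cong, simp_all add: mult_ac)
  also have "\<dots> = (\<Sum>i<n. c i * trF (l * (s i * t i)))"
    by (rule lin_sum) (simp_all add: trF_add trF_scale)
  also have "\<dots> = (\<Sum>i<n. sscale (c i) (sclass (s i) (t i))) (yl l)"
    unfolding eval_rep[OF yl_Sym] by (simp add: yl_def mult.assoc)
  finally show ?thesis .
qed

lemma ev_rep: "evS (\<Sum>i<(n::nat). sscale (c i) (sclass (s i) (t i))) = (\<Sum>i<n. qs (c i) (s i * (t i::'f)))"
  unfolding evS_def
proof (rule the_equality)
  show "\<exists>(n'::nat) c' s' t'. (\<Sum>i<n. sscale (c i) (sclass (s i) (t i))) = (\<Sum>i<n'. sscale (c' i) (sclass (s' i) (t' i)))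
     \<and> (\<Sum>i<n. qs (c i) (s i * (t i::'f))) = (\<Sum>i<n'. qs (c' i) (s' i * t' i))"
    by (rule exI[of _ n], rule exI[of _ c], rule exI[of _ s], rule exI[of _ t]) simp
next
  fix v assume "\<exists>(n'::nat) c' s' t'. (\<Sum>i<n. sscale (c i) (sclass (s i) (t i))) = (\<Sum>i<n'. sscale (c' i) (sclass (s' i) (t' i)))
     \<and> v = (\<Sum>i<n'. qs (c' i) (s' i * (t' i::'f)))"
  then obtain n' :: nat and c' s' t' where e: "(\<Sum>i<n. sscale (c i) (sclass (s i) (t i))) = (\<Sum>i<n'. sscale (c' i) (sclass (s' i) (t' i)))"
     "v = (\<Sum>i<n'. qs (c' i) (s' i * (t' i::'f)))" by blast
  have "trF (l * (v - (\<Sum>i<n. qs (c i) (s i * t i)))) = 0" for l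
    using tr_rep[where l=l and n=n' and c=c' and s=s' and t=t'] tr_rep[where l=l and n=n and c=c and s=s and t=t] e by (simp add: right_diff_distrib trF_diff)
  then show "v = (\<Sum>i<n. qs (c i) (s i * t i))" using nondeg[of "v - (\<Sum>i<n. qs (c i) (s i * t i))"] by simp
qed

lemma ev_SQ: "p \<in> (SQ::(('f \<Rightarrow> 'f \<Rightarrow> rat) \<Rightarrow> rat) set) \<Longrightarrow>
   \<exists>(n::nat) c s t. p = (\<Sum>i<n. sscale (c i) (sclass (s i) (t i))) \<and> evS p = (\<Sum>i<n. qs (c i) (s i * t i))"
proof -
  assume "p \<in> SQ"
  then obtain n :: nat and c s t where "p = (\<Sum>i<n. sscale (c i) (sclass (s i) (t i)))" using SQ_rep by blast
  moreover then have "evS p = (\<Sum>i<n. qs (c i) (s i * t i))" using ev_rep by simp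
  ultimately show ?thesis by blast
qed

lemma ev_tr: "p \<in> (SQ::(('f \<Rightarrow> 'f \<Rightarrow> rat) \<Rightarrow> rat) set) \<Longrightarrow> trF (l * evS p) = p (yl l)"
proof -
  assume "p \<in> SQ"
  then obtain n :: nat and c s t where "p = (\<Sum>i<n. sscale (c i) (sclass (s i) (t i)))" "evS p = (\<Sum>i<n. qs (c i) (s i * t i))"
    using ev_SQ by blast
  then show ?thesis using tr_rep[where l=l and n=n and c=c and s=s and t=t] by simp
qed

lemma SQ_add: "p \<in> SQ \<Longrightarrow> q \<in> SQ \<Longrightarrow> p + q \<in> (SQ::(('f \<Rightarrow> 'f \<Rightarrow> rat) \<Rightarrow> rat) set)"
  unfolding SQ_def by (rule Sq.span_add)

lemma SQ_scale: "p \<in> SQ \<Longrightarrow> sscale a p \<in> (SQ::(('f \<Rightarrow> 'f \<Rightarrow> rat) \<Rightarrow> rat) set)"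
  unfolding SQ_def by (rule Sq.span_scale)

lemma ev_add: assumes "p \<in> SQ" "q \<in> (SQ::(('f \<Rightarrow> 'f \<Rightarrow> rat) \<Rightarrow> rat) set)"
  shows "evS (p + q) = evS p + evS q"
proof -
  have "trF (l * (evS (p + q) - (evS p + evS q))) = 0" for l
    using ev_tr[OF SQ_add[OF assms], of l] ev_tr[OF assms(1), of l] ev_tr[OF assms(2), of l]
    by (simp add: right_diff_distrib distrib_left trF_diff trF_add)
  then show ?thesis using nondeg[of "evS (p + q) - (evS p + evS q)"] by simp
qed

lemma ev_scale: assumes "p \<in> (SQ::(('f \<Rightarrow> 'f \<Rightarrow> rat) \<Rightarrow> rat) set)"
  shows "evS (sscale a p) = qs a (evS p)"
proof -
  have "trF (l * (evS (sscale a p) - qs a (evS p))) = 0" for l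
  proof -
    have "trF (l * qs a (evS p)) = a * trF (l * evS p)"
      unfolding qs_def using trF_mscale by simp
    then show ?thesis
      using ev_tr[OF SQ_scale[OF assms], of l a] ev_tr[OF assms, of l]
      by (simp add: right_diff_distrib trF_diff sscale_def)
  qed
  then show ?thesis using nondeg[of "evS (sscale a p) - qs a (evS p)"] by simp
qed

lemma bilin_1_0: "bilin (y::'f \<Rightarrow> 'f \<Rightarrow> rat) \<Longrightarrow> y 1 0 = 0"
  unfolding bilin_def by (metis add.right_neutral add_left_cancel)

lemma ev_ker: assumes "p \<in> (SQ::(('f \<Rightarrow> 'f \<Rightarrow> rat) \<Rightarrow> rat) set)"
  shows "evS p = 0 \<longleftrightarrow> (\<forall>y\<in>Lambda1. p y = 0)"
proof
  assume "\<forall>y\<in>Lambda1. p y = 0"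
  then have "trF (l * evS p) = 0" for l using ev_tr[OF assms] yl_Lambda1 by simp
  then show "evS p = 0" using nondeg by blast
next
  assume ev0: "evS p = 0"
  obtain n :: nat and c s t where r: "p = (\<Sum>i<n. sscale (c i) (sclass (s i) (t i)))" "evS p = (\<Sum>i<n. qs (c i) (s i * t i))"
    using ev_SQ[OF assms] by blast
  show "\<forall>y\<in>Lambda1. p y = 0"
  proof
    fix y :: "'f \<Rightarrow> 'f \<Rightarrow> rat" assume y: "y \<in> Lambda1"
    have b: "bilin y" using y TensQ_bilin unfolding Lambda1_def by blast
    have "p y = (\<Sum>i<n. c i * y (s i) (t i))" using r(1) eval_rep[OF Lambda1_Sym[OF y]] by simp
    also have "\<dots> = (\<Sum>i<n. c i * y 1 (s i * t i))"
      by (rule sum.cong[OF refl]) (simp only: Lambda1_eq[OF y, of "s _" "t _"])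
    also have "\<dots> = y 1 (\<Sum>i<n. of_rat (c i) * (s i * t i))"
      by (rule lin_sum[where h="\<lambda>d. y 1 d", symmetric]) (use b in \<open>simp_all add: bilin_def\<close>)
    also have "\<dots> = y 1 (evS p)" using r(2) by (simp add: qs_def)
    also have "\<dots> = 0" using ev0 bilin_1_0[OF b] by simp
    finally show "p y = 0" .
  qed
qed

definition Gs :: "(('f::field_char_0 \<Rightarrow> 'f \<Rightarrow> rat) \<Rightarrow> rat) set" where
  "Gs = (\<lambda>q. sclass (fst q) (snd q)) ` (fbasis \<times> fbasis)"

lemma Gs_fin: "finite (Gs::(('f \<Rightarrow> 'f \<Rightarrow> rat) \<Rightarrow> rat) set)"
  unfolding Gs_def using fb_fin by simp

lemma sclass_exp: "sclass s t = (\<Sum>q\<in>fbasis \<times> fbasis. sscale (Fq.representation fbasis s (fst q) * Fq.representation fbasis t (snd q)) (sclass (fst q) (snd (q::'f \<times> 'f))))"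
proof (rule ext)
  fix y :: "'f \<Rightarrow> 'f \<Rightarrow> rat"
  show "sclass s t y = (\<Sum>q\<in>fbasis \<times> fbasis. sscale (Fq.representation fbasis s (fst q) * Fq.representation fbasis t (snd q)) (sclass (fst q) (snd (q::'f \<times> 'f)))) y"
  proof (cases "y \<in> SymQ")
    case True
    then have b: "bilin y" using TensQ_bilin unfolding SymQ_def by blast
    have "sclass s t y = y s t" using True by (simp add: sclass_def)
    also have "\<dots> = (\<Sum>b1\<in>fbasis. \<Sum>b2\<in>fbasis. Fq.representation fbasis s b1 * Fq.representation fbasis t b2 * y b1 (b2::'f))"
      by (rule expand_bilin[OF b])
    also have "\<dots> = (\<Sum>q\<in>fbasis \<times> fbasis. Fq.representation fbasis s (fst q) * Fq.representation fbasis t (snd q) * y (fst q) (snd q))"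
      by (simp add: sum.cartesian_product split_def)
    also have "\<dots> = (\<Sum>q\<in>fbasis \<times> fbasis. sscale (Fq.representation fbasis s (fst q) * Fq.representation fbasis t (snd q)) (sclass (fst q) (snd (q::'f \<times> 'f)))) y"
      unfolding sum_apply_fun using True by (simp add: sscale_def sclass_def)
    finally show ?thesis .
  next
    case False
    then show ?thesis unfolding sum_apply_fun by (simp add: sscale_def sclass_def)
  qed
qed

lemma SQ_sub: "(SQ::(('f \<Rightarrow> 'f \<Rightarrow> rat) \<Rightarrow> rat) set) \<subseteq> Sq.span Gs"
  unfolding SQ_def
proof (rule Sq.span_minimal[OF _ Sq.subspace_span])
  show "{sclass s t |s t. True} \<subseteq> Sq.span (Gs::(('f \<Rightarrow> 'f \<Rightarrow> rat) \<Rightarrow> rat) set)"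
  proof
    fix x :: "('f \<Rightarrow> 'f \<Rightarrow> rat) \<Rightarrow> rat" assume "x \<in> {sclass s t |s t. True}"
    then obtain s t where x: "x = sclass s t" by blast
    show "x \<in> Sq.span Gs" unfolding x sclass_exp[of s t] Gs_def
      by (rule Sq.span_sum, rule Sq.span_scale, rule Sq.span_base) blast
  qed
qed

end

lemma ann_sub: "Sq.subspace {p \<in> (SQ::(('f::field_char_0 \<Rightarrow> 'f \<Rightarrow> rat) \<Rightarrow> rat) set). \<forall>y\<in>Y. p y = 0}"
  unfolding Sq.subspace_def
proof (intro conjI allI impI ballI)
  show "0 \<in> {p \<in> (SQ::(('f \<Rightarrow> 'f \<Rightarrow> rat) \<Rightarrow> rat) set). \<forall>y\<in>Y. p y = 0}"
    unfolding SQ_def using Sq.span_zero by simp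
  fix x y assume "x \<in> {p \<in> (SQ::(('f \<Rightarrow> 'f \<Rightarrow> rat) \<Rightarrow> rat) set). \<forall>y\<in>Y. p y = 0}" "y \<in> {p \<in> (SQ::(('f \<Rightarrow> 'f \<Rightarrow> rat) \<Rightarrow> rat) set). \<forall>y\<in>Y. p y = 0}"
  then show "x + y \<in> {p \<in> (SQ::(('f \<Rightarrow> 'f \<Rightarrow> rat) \<Rightarrow> rat) set). \<forall>y\<in>Y. p y = 0}"
    unfolding SQ_def using Sq.span_add by auto
next
  fix c x assume "x \<in> {p \<in> (SQ::(('f \<Rightarrow> 'f \<Rightarrow> rat) \<Rightarrow> rat) set). \<forall>y\<in>Y. p y = 0}"
  then show "sscale c x \<in> {p \<in> (SQ::(('f \<Rightarrow> 'f \<Rightarrow> rat) \<Rightarrow> rat) set). \<forall>y\<in>Y. p y = 0}"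
    unfolding SQ_def using Sq.span_scale by (auto simp: sscale_def)
qed

lemma (in vector_space_pair) dim_key:
  assumes lin: "Vector_Spaces.linear s1 s2 f"
   and G: "finite G"
   and A: "vs1.subspace A" "A \<subseteq> vs1.span G"
   and C: "vs1.subspace C" "C \<subseteq> vs1.span G"
   and f0: "\<forall>x\<in>C. f x = 0" and fA: "\<forall>x\<in>A. f x = 0 \<longrightarrow> x \<in> C"
  shows "vs1.dim {x+y|x y. x\<in>A \<and> y\<in>C} = vs1.dim C + vs2.dim (f ` A)"
proof -
  interpret lf: Vector_Spaces.linear s1 s2 f by fact
  obtain Bc where Bc: "Bc \<subseteq> C" "vs1.independent Bc" "C \<subseteq> vs1.span Bc" "card Bc = vs1.dim C"
    using vs1.basis_exists by blast
  have "Bc \<subseteq> Bc \<union> A" by blast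
  then obtain D where D: "Bc \<subseteq> D" "D \<subseteq> Bc \<union> A" "vs1.independent D" "Bc \<union> A \<subseteq> vs1.span D"
    using vs1.maximal_independent_subset_extend[OF _ Bc(2)] by metis
  have DG: "D \<subseteq> vs1.span G" using D(2) Bc(1) A(2) C(2) by blast
  have finD: "finite D" using vs1.independent_span_bound[OF G D(3) DG] by blast
  define D' where "D' = D - Bc"
  have D'A: "D' \<subseteq> A" using D(2) D'_def by blast
  have finD': "finite D'" using finD D'_def by simp
  have finBc: "finite Bc" using finD D(1) finite_subset by blast
  have DU: "D = Bc \<union> D'" "Bc \<inter> D' = {}" using D(1) D'_def by blast+
  have cardD: "card D = card Bc + card D'" using DU finBc finD' card_Un_disjoint by metis
  let ?S = "{x+y|x y. x\<in>A \<and> y\<in>C}"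
  have "vs1.dim ?S = card D"
  proof (rule vs1.dim_unique[OF _ _ D(3) refl])
    show "D \<subseteq> ?S"
    proof
      fix d assume "d \<in> D"
      then have "d \<in> Bc \<or> d \<in> A" using D(2) by blast
      then show "d \<in> ?S"
      proof
        assume "d \<in> Bc" then have "d \<in> C" using Bc(1) by blast
        then show ?thesis using vs1.subspace_0[OF A(1)] by force
      next
        assume "d \<in> A" then show ?thesis using vs1.subspace_0[OF C(1)] by force
      qed
    qed
    show "?S \<subseteq> vs1.span D"
    proof
      fix z assume "z \<in> ?S"
      then obtain x y where xy: "z = x + y" "x \<in> A" "y \<in> C" by blast
      have "x \<in> vs1.span D" using xy(2) D(4) by blast
      moreover have "y \<in> vs1.span D" using xy(3) Bc(3) vs1.span_mono[OF D(1)] by blast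
      ultimately show "z \<in> vs1.span D" using xy(1) vs1.span_add by blast
    qed
  qed
  have spanD'A: "vs1.span D' \<subseteq> A" using vs1.span_minimal[OF D'A A(1)] .
  have K: False if "d \<in> D'" "z \<in> vs1.span (D' - {d})" "f d = f z" for d z
  proof -
    have dA: "d \<in> A" using that(1) D'A by blast
    have zA: "z \<in> A" using that(2) spanD'A vs1.span_mono[of "D' - {d}" D'] by blast
    have "d - z \<in> A" using vs1.subspace_diff[OF A(1) dA zA] .
    moreover have "f (d - z) = 0" using that(3) lf.diff by simp
    ultimately have "d - z \<in> C" using fA by blast
    then have "d - z \<in> vs1.span Bc" using Bc(3) by blast
    moreover have "Bc \<subseteq> D - {d}" using that(1) D'_def D(1) by blast
    ultimately have 1: "d - z \<in> vs1.span (D - {d})" using vs1.span_mono by blast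
    have "D' - {d} \<subseteq> D - {d}" using D'_def by blast
    then have 2: "z \<in> vs1.span (D - {d})" using that(2) vs1.span_mono by blast
    have "d = (d - z) + z" by simp
    then have "d \<in> vs1.span (D - {d})" using vs1.span_add[OF 1 2] by metis
    moreover have "d \<in> D" using that(1) D'_def by blast
    ultimately have "vs1.dependent D" using vs1.dependent_def by blast
    then show False using D(3) by blast
  qed
  have inj: "inj_on f D'"
  proof (rule inj_onI, rule ccontr)
    fix d1 d2 assume "d1 \<in> D'" "d2 \<in> D'" "f d1 = f d2" "d1 \<noteq> d2"
    then show False using K[of d1 d2] vs1.span_base[of d2 "D' - {d1}"] by blast
  qed
  have indep: "vs2.independent (f ` D')"
  proof
    assume "vs2.dependent (f ` D')"
    then obtain a where a: "a \<in> f ` D'" "a \<in> vs2.span (f ` D' - {a})"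
      using vs2.dependent_def by blast
    then obtain d where d: "d \<in> D'" "a = f d" by blast
    have "f ` D' - {a} = f ` (D' - {d})" using inj d by (auto simp: inj_on_def)
    then have "a \<in> f ` vs1.span (D' - {d})" using a(2) lf.span_image by simp
    then obtain z where "z \<in> vs1.span (D' - {d})" "f d = f z" using d(2) by (metis imageE)
    then show False using K d by blast
  qed
  have sp: "f ` A \<subseteq> vs2.span (f ` D')"
  proof -
    have "f ` D \<subseteq> vs2.span (f ` D')"
    proof
      fix y assume "y \<in> f ` D"
      then obtain d where d: "d \<in> D" "y = f d" by blast
      show "y \<in> vs2.span (f ` D')"
      proof (cases "d \<in> Bc")
        case True then have "y = 0" using d f0 Bc(1) by blast
        then show ?thesis using vs2.span_zero by simp
      next
        case False then have "d \<in> D'" using d D'_def by blast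
        then show ?thesis using d vs2.span_base by blast
      qed
    qed
    then have "vs2.span (f ` D) \<subseteq> vs2.span (f ` D')"
      using vs2.span_minimal vs2.subspace_span by blast
    moreover have "f ` A \<subseteq> f ` vs1.span D" using D(4) by blast
    ultimately show ?thesis using lf.span_image by auto
  qed
  have "vs2.dim (f ` A) = card (f ` D')"
    by (rule vs2.dim_unique[OF _ sp indep refl]) (use D'A in blast)
  also have "\<dots> = card D'" using card_image[OF inj] .
  finally show ?thesis using \<open>vs1.dim ?S = card D\<close> cardD Bc(4) by simp
qed


theorem proposition3p7:
  fixes g :: nat and I :: "'f::field_char_0 set"
    and V :: "'v set" and E :: "'e set" and ends :: "'e \<Rightarrow> 'v \<times> 'v" and w :: "'e \<Rightarrow> 'f"
    and AnnU :: "(('f \<Rightarrow> 'f \<Rightarrow> rat) \<Rightarrow> rat) set"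
  assumes "totally_real_number_field TYPE('f) g"
    and "is_lattice I"
    and "weighted_stable_curve g I V E ends w"
    and "module.subspace sscale AnnU" and "AnnU \<subseteq> NS (weights E w)"
  shows "(subtorus_dim (NS (weights E w)) (AnnT (weights E w))
           - subtorus_dim (NS (weights E w)) (ssum AnnU (AnnT (weights E w)))
         = int (dimF (evS ` AnnU)))
         \<and> (subtorus_dim (NS (weights E w)) (AnnT (weights E w)) = int (dimF (evS ` NS (weights E w))))"
proof -
  have H: "\<exists>B::'f set. finite B \<and> Fq.span B = UNIV"
    using assms(1) unfolding totally_real_number_field_def by blast
  define N where "N = NS (weights E w)"
  define C where "C = AnnT (weights E w)"
  obtain Bq :: "(('f \<Rightarrow> 'f \<Rightarrow> rat) \<Rightarrow> rat) set" where Bq: "Bq \<subseteq> SQ" "Sq.independent Bq" "SQ \<subseteq> Sq.span Bq"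
    using Sq.basis_exists by metis
  obtain gg where gg: "Vector_Spaces.linear sscale qs gg" "\<forall>x\<in>Bq. gg x = evS x"
    using P.linear_independent_extend[OF Bq(2)] by blast
  interpret lg: Vector_Spaces.linear sscale qs gg by (rule gg(1))
  have SQsub: "Sq.subspace (SQ::(('f \<Rightarrow> 'f \<Rightarrow> rat) \<Rightarrow> rat) set)" unfolding SQ_def by simp
  have spBq: "Sq.span Bq \<subseteq> SQ" using Sq.span_minimal[OF Bq(1) SQsub] .
  have gev0: "x \<in> SQ \<and> gg x = evS x" if "x \<in> Sq.span Bq" for x
    using that
  proof (induction rule: Sq.span_induct_alt)
    case base
    have e: "evS (0::('f \<Rightarrow> 'f \<Rightarrow> rat) \<Rightarrow> rat) = 0"
      using ev_rep[OF H, where n=0] by simp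
    show ?case by (rule conjI[OF Sq.subspace_0[OF SQsub]]) (simp only: lg.zero e)
  next
    case (step a x y)
    have xS: "x \<in> SQ" using step(1) Bq(1) by blast
    have "sscale a x + y \<in> SQ"
      using SQ_add[OF H SQ_scale[OF H xS] conjunct1[OF step(2)]] .
    moreover have "gg (sscale a x + y) = evS (sscale a x + y)"
      using step(1,2) gg(2) xS lg.add lg.scale
        ev_add[OF H SQ_scale[OF H xS] conjunct1[OF step(2)]] ev_scale[OF H xS] by simp
    ultimately show ?case by blast
  qed
  have gev: "gg x = evS x" if "x \<in> SQ" for x using gev0 Bq(3) that by blast
  have NSQ: "N \<subseteq> SQ" unfolding N_def NS_def by blast
  have Nsub: "Sq.subspace N" unfolding N_def NS_def by (rule ann_sub)
  have Ksub: "Sq.subspace (AnnLambda1::(('f \<Rightarrow> 'f \<Rightarrow> rat) \<Rightarrow> rat) set)" unfolding AnnLambda1_def by (rule ann_sub)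
  have Csub: "Sq.subspace C" unfolding C_def AnnT_def N_def[symmetric] using Sq.subspace_inter[OF Nsub Ksub] .
  have CN: "C \<subseteq> N" unfolding C_def AnnT_def N_def by blast
  have f0: "\<forall>x\<in>C. gg x = 0"
  proof
    fix x assume "x \<in> C"
    then have "x \<in> AnnLambda1" unfolding C_def AnnT_def by blast
    then have "x \<in> SQ" "\<forall>y\<in>Lambda1. x y = 0" unfolding AnnLambda1_def by blast+
    then show "gg x = 0" using ev_ker[OF H] gev by simp
  qed
  have key: "Sq.dim (ssum A C) = Sq.dim C + Fq.dim (evS ` A)" if A: "Sq.subspace A" "A \<subseteq> N" for A
  proof -
    have fA: "\<forall>x\<in>A. gg x = 0 \<longrightarrow> x \<in> C"
    proof (intro ballI impI)
      fix x assume x: "x \<in> A" "gg x = 0"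
      then have xS: "x \<in> SQ" using A(2) NSQ by blast
      then have "evS x = 0" using x gev by simp
      then have "\<forall>y\<in>Lambda1. x y = 0" using ev_ker[OF H xS] by simp
      then have "x \<in> AnnLambda1" unfolding AnnLambda1_def using xS by blast
      then show "x \<in> C" unfolding C_def AnnT_def using x(1) A(2) N_def by blast
    qed
    have "gg ` A = evS ` A" using gev A(2) NSQ by (intro image_cong) auto
    moreover have "Sq.dim {x+y|x y. x\<in>A \<and> y\<in>C} = Sq.dim C + Fq.dim (gg ` A)"
      by (rule P.dim_key[OF gg(1) Gs_fin[OF H] A(1) _ Csub _ f0 fA])
         (use A(2) NSQ CN SQ_sub[OF H] in blast)+
    ultimately show ?thesis unfolding ssum_def by simp
  qed
  have "ssum N C = N"
  proof
    show "ssum N C \<subseteq> N" unfolding ssum_def using CN Sq.subspace_add[OF Nsub] by blast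
    show "N \<subseteq> ssum N C"
    proof
      fix x assume "x \<in> N"
      moreover have "(0::('f \<Rightarrow> 'f \<Rightarrow> rat) \<Rightarrow> rat) \<in> C" using Sq.subspace_0[OF Csub] .
      moreover have "x = x + 0" by (rule add_0_right[symmetric])
      ultimately show "x \<in> ssum N C" unfolding ssum_def by blast
    qed
  qed
  then have k2: "Sq.dim N = Sq.dim C + Fq.dim (evS ` N)" using key[OF Nsub order_refl] by simp
  have k1: "Sq.dim (ssum AnnU C) = Sq.dim C + Fq.dim (evS ` AnnU)"
    using key[OF assms(4) assms(5)[folded N_def]] .
  show ?thesis
    unfolding N_def[symmetric] C_def[symmetric] subtorus_dim_def dimS_def dimF_def
    using k1 k2 by simp
qed

end
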